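(* Let $G=(V,E)$ be a directed graph with $n=|V|$, $h>0$, and $1\le\alpha\le\log n$. For any vertices $u,v$ with $\overline{\mathrm{dist}}(u,v)\le 2h$, $$\sum_{b\in V}\min\{M_h^\alpha(u,b),M_h^\alpha(v,b)\}\ge 2^{-8\alpha}.$$
   Context: $G$ has positive integer edge lengths; $\mathrm{dist}$ is directed shortest-path distance and $\overline{\mathrm{dist}}(u,v)=\mathrm{dist}(u,v)+\mathrm{dist}(v,u)$. Exponential weights: $w_h^\alpha(u,v)=1$ if $u=v$; $=2^{-\alpha\overline{\mathrm{dist}}(u,v)/h}$ if $u\neq v$ and $\overline{\mathrm{dist}}(u,v)\le\frac{2h\log_2 n}{\alpha}$; $=0$ otherwise. $w_h^\alpha(u)=\sum_{b\in V}w_h^\alpha(u,b)$ and the mixing factor is $M_h^\alpha(u,v)=w_h^\alpha(u,v)/w_h^\alpha(u)$. *)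

theory Defs
  imports "HOL-Analysis.Analysis" "HOL-Library.Extended_Nat"
begin

definition is_path :: "('a \<times> 'a) set \<Rightarrow> 'a list \<Rightarrow> 'a \<Rightarrow> 'a \<Rightarrow> bool" where
  "is_path E xs u v \<longleftrightarrow> xs \<noteq> [] \<and> hd xs = u \<and> last xs = v \<and>
     (\<forall>i. Suc i < length xs \<longrightarrow> (xs ! i, xs ! Suc i) \<in> E)"

definition path_len :: "('a \<times> 'a \<Rightarrow> nat) \<Rightarrow> 'a list \<Rightarrow> nat" where
  "path_len len xs = (\<Sum>i<length xs - 1. len (xs ! i, xs ! Suc i))"

text \<open>Directed shortest-path distance (infinite if v is unreachable from u).\<close>
definition gdist :: "('a \<times> 'a) set \<Rightarrow> ('a \<times> 'a \<Rightarrow> nat) \<Rightarrow> 'a \<Rightarrow> 'a \<Rightarrow> enat" where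
  "gdist E len u v = (INF xs \<in> {xs. is_path E xs u v}. enat (path_len len xs))"

definition rdist :: "('a \<times> 'a) set \<Rightarrow> ('a \<times> 'a \<Rightarrow> nat) \<Rightarrow> 'a \<Rightarrow> 'a \<Rightarrow> enat" where
  "rdist E len u v = gdist E len u v + gdist E len v u"

definition wexp :: "'a set \<Rightarrow> ('a \<times> 'a) set \<Rightarrow> ('a \<times> 'a \<Rightarrow> nat) \<Rightarrow> real \<Rightarrow> real \<Rightarrow> 'a \<Rightarrow> 'a \<Rightarrow> real" where
  "wexp V E len h \<alpha> u v =
     (if u = v then 1
      else if rdist E len u v \<noteq> \<infinity> \<and>
              real (the_enat (rdist E len u v)) \<le> 2 * h * log 2 (real (card V)) / \<alpha>
           then 2 powr (- \<alpha> * real (the_enat (rdist E len u v)) / h)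
      else 0)"

definition wtot :: "'a set \<Rightarrow> ('a \<times> 'a) set \<Rightarrow> ('a \<times> 'a \<Rightarrow> nat) \<Rightarrow> real \<Rightarrow> real \<Rightarrow> 'a \<Rightarrow> real" where
  "wtot V E len h \<alpha> u = (\<Sum>b\<in>V. wexp V E len h \<alpha> u b)"

definition mixing :: "'a set \<Rightarrow> ('a \<times> 'a) set \<Rightarrow> ('a \<times> 'a \<Rightarrow> nat) \<Rightarrow> real \<Rightarrow> real \<Rightarrow> 'a \<Rightarrow> 'a \<Rightarrow> real" where
  "mixing V E len h \<alpha> u v = wexp V E len h \<alpha> u v / wtot V E len h \<alpha> u"

end

theory Submission imports Defs begin

lemma p2_le: "a \<le> b \<Longrightarrow> (2::real) powr a \<le> 2 powr b"
  using powr_le_cancel_iff[of 2 a b] by simp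

lemma p2_le1: "a \<le> 0 \<Longrightarrow> (2::real) powr a \<le> 1"
  using p2_le[of a 0] by simp


lemma path_len_Cons2: "path_len len (x # y # zs) = len (x,y) + path_len len (y # zs)"
proof -
  have "length (x#y#zs) - 1 = Suc (length (y#zs) - 1)" by simp
  then show ?thesis unfolding path_len_def by (simp only: sum.lessThan_Suc_shift) simp
qed

lemma path_len_single: "path_len len [x] = 0"
  unfolding path_len_def by simp

lemma is_path_single: "is_path E [x] u v \<longleftrightarrow> x = u \<and> x = v"
  unfolding is_path_def by auto

lemma is_path_Cons2: "is_path E (x # y # zs) u v \<longleftrightarrow> x = u \<and> (x,y) \<in> E \<and> is_path E (y # zs) y v"
proof
  assume a: "is_path E (x # y # zs) u v"
  have a2: "\<forall>i. Suc i < length (x#y#zs) \<longrightarrow> ((x#y#zs) ! i, (x#y#zs) ! Suc i) \<in> E"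
    using a unfolding is_path_def by blast
  have "(x,y) \<in> E" using spec[OF a2, of 0] by simp
  moreover have "\<forall>i. Suc i < length (y#zs) \<longrightarrow> ((y#zs) ! i, (y#zs) ! Suc i) \<in> E"
  proof (intro allI impI)
    fix i assume "Suc i < length (y#zs)"
    then have "Suc (Suc i) < length (x#y#zs)" by simp
    then show "((y#zs) ! i, (y#zs) ! Suc i) \<in> E" using spec[OF a2, of "Suc i"] by simp
  qed
  ultimately show "x = u \<and> (x,y) \<in> E \<and> is_path E (y # zs) y v" using a unfolding is_path_def by auto
next
  assume a: "x = u \<and> (x,y) \<in> E \<and> is_path E (y # zs) y v"
  have "\<forall>i. Suc i < length (x#y#zs) \<longrightarrow> ((x#y#zs) ! i, (x#y#zs) ! Suc i) \<in> E"
  proof (intro allI impI)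
    fix i assume i: "Suc i < length (x#y#zs)"
    show "((x#y#zs) ! i, (x#y#zs) ! Suc i) \<in> E"
    proof (cases i)
      case 0 then show ?thesis using a by auto
    next
      case (Suc j) then show ?thesis using a i unfolding is_path_def by auto
    qed
  qed
  then show "is_path E (x # y # zs) u v" using a unfolding is_path_def by auto
qed

lemma path_append:
  "is_path E xs u v \<Longrightarrow> is_path E ys v w \<Longrightarrow>
   is_path E (xs @ tl ys) u w \<and> path_len len (xs @ tl ys) = path_len len xs + path_len len ys"
proof (induction xs arbitrary: u)
  case Nil then show ?case by (simp add: is_path_def)
next
  case (Cons x xs)
  show ?case
  proof (cases xs)
    case Nil
    then have "x = u" "x = v" using Cons.prems by (auto simp: is_path_single)
    moreover have "ys = hd ys # tl ys" using Cons.prems(2) unfolding is_path_def by (cases ys) auto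
    ultimately show ?thesis using Nil Cons.prems by (auto simp: path_len_single is_path_def)
  next
    case (Cons y zs)
    have p: "x = u" "(x,y) \<in> E" "is_path E xs y v" using Cons.prems \<open>xs = y # zs\<close> by (auto simp: is_path_Cons2)
    from Cons.IH[OF p(3) Cons.prems(2)] have ih: "is_path E (xs @ tl ys) y w"
      "path_len len (xs @ tl ys) = path_len len xs + path_len len ys" by auto
    have eq: "(x # xs) @ tl ys = x # y # (zs @ tl ys)" using Cons by simp
    show ?thesis unfolding eq using ih p \<open>xs = y # zs\<close> by (simp add: is_path_Cons2 path_len_Cons2)
  qed
qed

lemma gdist_attained:
  assumes "gdist E len u v \<noteq> \<infinity>"
  shows "\<exists>xs. is_path E xs u v \<and> gdist E len u v = enat (path_len len xs)"
proof -
  let ?S = "(\<lambda>xs. enat (path_len len xs)) ` {xs. is_path E xs u v}"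
  have "?S \<noteq> {}" using assms unfolding gdist_def by (metis INF_empty top_enat_def image_empty)
  then obtain s where "s \<in> ?S" by blast
  then have "Inf ?S \<in> ?S" unfolding Inf_enat_def using LeastI[of "\<lambda>x. x \<in> ?S" s] by auto
  then show ?thesis unfolding gdist_def by auto
qed

lemma gdist_le_path: "is_path E xs u v \<Longrightarrow> gdist E len u v \<le> enat (path_len len xs)"
  unfolding gdist_def by (rule INF_lower) simp

lemma gdist_triangle: "gdist E len u w \<le> gdist E len u v + gdist E len v w"
proof (cases "gdist E len u v = \<infinity> \<or> gdist E len v w = \<infinity>")
  case True then show ?thesis by auto
next
  case False
  then obtain xs ys where a: "is_path E xs u v" "gdist E len u v = enat (path_len len xs)"
    and b: "is_path E ys v w" "gdist E len v w = enat (path_len len ys)"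
    using gdist_attained by metis
  have "gdist E len u w \<le> enat (path_len len (xs @ tl ys))"
    using path_append[OF a(1) b(1), where len=len] by (intro gdist_le_path) blast
  also have "\<dots> = gdist E len u v + gdist E len v w"
    using path_append[OF a(1) b(1), where len=len] a b by simp
  finally show ?thesis .
qed

lemma rdist_sym: "rdist E len x y = rdist E len y x"
  unfolding rdist_def by (simp add: add.commute)

lemma rdist_triangle: "rdist E len u w \<le> rdist E len u v + rdist E len v w"
proof -
  have "rdist E len u w \<le> (gdist E len u v + gdist E len v w) + (gdist E len w v + gdist E len v u)"
    unfolding rdist_def by (intro add_mono gdist_triangle)
  also have "\<dots> = rdist E len u v + rdist E len v w" unfolding rdist_def by (simp add: ac_simps)
  finally show ?thesis .
qed

lemma rdist_triangle_real:
  assumes "rdist E len u v \<noteq> \<infinity>" "rdist E len v w \<noteq> \<infinity>"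
  shows "rdist E len u w \<noteq> \<infinity> \<and>
    real (the_enat (rdist E len u w)) \<le> real (the_enat (rdist E len u v)) + real (the_enat (rdist E len v w))"
proof -
  obtain a b where ab: "rdist E len u v = enat a" "rdist E len v w = enat b" using assms by auto
  have t: "rdist E len u w \<le> enat (a + b)" using rdist_triangle[of E len u w v] ab by simp
  then obtain c where c: "rdist E len u w = enat c" "c \<le> a + b"
    by (metis enat_ile enat_ord_simps(1))
  then show ?thesis using ab by simp
qed



lemma wexp_nonneg: "0 \<le> wexp V E len h \<alpha> u b"
  unfolding wexp_def by auto

lemma wexp_le1: assumes "h > 0" "\<alpha> > 0" shows "wexp V E len h \<alpha> u b \<le> 1"
proof -
  have "2 powr (- \<alpha> * r / h) \<le> 1" if "r \<ge> 0" for r :: real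
  proof -
    have "- \<alpha> * r / h \<le> 0" using assms that by (simp add: divide_nonpos_pos mult_nonneg_nonneg)
    then show ?thesis by (rule p2_le1)
  qed
  then show ?thesis unfolding wexp_def by auto
qed

lemma key:
  assumes fin: "finite V" and h: "h > 0" and a1: "1 \<le> \<alpha>" and aL: "\<alpha> \<le> log 2 (real (card V))"
    and Dfin: "rdist E len x y \<noteq> \<infinity>" and Dle: "real (the_enat (rdist E len x y)) \<le> 2 * h"
  shows "wexp V E len h \<alpha> y b \<ge> 2 powr (-2*\<alpha>) * wexp V E len h \<alpha> x b - 1 / (real (card V))^2"
proof -
  define n where "n = real (card V)"
  define L where "L = log 2 n"
  define T where "T = 2 * h * L / \<alpha>"
  define D where "D = real (the_enat (rdist E len x y))"
  let ?w = "wexp V E len h \<alpha>"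
  have npos: "n > 0"
  proof (rule ccontr)
    assume "\<not> n > 0"
    then have "card V = 0" unfolding n_def by simp
    then show False using aL a1 by (simp add: log_def)
  qed
  have D0: "D \<ge> 0" unfolding D_def by simp
  have LT: "2 * h * L / \<alpha> = T" unfolding T_def ..
  have DT: "D \<le> T"
  proof -
    have q: "1 \<le> L / \<alpha>" using aL a1 unfolding L_def n_def by (subst le_divide_eq_1_pos) auto
    have "2*h*1 \<le> 2*h*(L/\<alpha>)" using q h by (intro mult_left_mono) auto
    moreover have "T = 2*h*(L/\<alpha>)" unfolding T_def by (simp only: times_divide_eq_right)
    moreover have "D \<le> 2*h" using Dle unfolding D_def .
    ultimately show ?thesis by linarith
  qed
  have pw: "2 powr (-2*\<alpha>) \<le> 1" using a1 by (intro p2_le1) simp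
  have small_aux: "\<alpha> * D / h \<le> 2 * \<alpha>" using Dle h a1 unfolding D_def by (simp add: field_simps)
  have small: "2 powr (-2*\<alpha>) * 1 \<le> 2 powr (- \<alpha> * D / h)"
  proof -
    have "-2*\<alpha> \<le> - \<alpha> * D / h" using small_aux by simp
    then show ?thesis by (simp add: p2_le)
  qed
  have inv0: "0 \<le> 1 / (real (card V))^2" by simp
  have wx1: "?w x b \<le> 1" using a1 by (intro wexp_le1[OF h]) simp
  have wy0: "?w y b \<ge> 0" by (rule wexp_nonneg)
  show ?thesis
  proof (cases "b = y \<or> ?w x b = 0")
    case True
    then show ?thesis
    proof
      assume "b = y"
      then have "?w y b = 1" unfolding wexp_def by simp
      moreover have "2 powr (-2*\<alpha>) * ?w x b \<le> 1" by (rule mult_le_one[OF pw wexp_nonneg wx1])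
      ultimately show ?thesis using inv0 by linarith
    next
      assume "?w x b = 0"
      then have "2 powr (-2*\<alpha>) * ?w x b = 0" by simp
      then show ?thesis using wy0 inv0 by linarith
    qed
  next
    case False
    then have hby: "b \<noteq> y" and wpos: "?w x b \<noteq> 0" by auto
    have thr: "2 * h * log 2 (real (card V)) / \<alpha> = T" unfolding T_def L_def n_def ..
    show ?thesis
    proof (cases "b = x")
      case True
      then have "x \<noteq> y" using hby by simp
      then have "y \<noteq> x" by simp
      have yx: "rdist E len y x = rdist E len x y" by (rule rdist_sym)
      have wyx: "?w y x = 2 powr (- \<alpha> * D / h)"
        unfolding wexp_def yx thr using \<open>y \<noteq> x\<close> Dfin DT by (simp add: D_def)
      have wxx: "?w x x = 1" unfolding wexp_def by simp
      show ?thesis unfolding True wyx wxx using small inv0 by linarith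
    next
      case False
      define d where "d = real (the_enat (rdist E len x b))"
      have xb: "rdist E len x b \<noteq> \<infinity>" "d \<le> T" and wxb: "?w x b = 2 powr (- \<alpha> * d / h)"
        using wpos False unfolding wexp_def d_def thr by (auto split: if_splits)
      obtain yb: "rdist E len y b \<noteq> \<infinity>" and e: "real (the_enat (rdist E len y b)) \<le> D + d"
        using rdist_triangle_real[of E len y x b] Dfin xb rdist_sym[of E len x y] unfolding D_def d_def by auto
      define e where "e = real (the_enat (rdist E len y b))"
      have e': "e \<le> D + d" using e unfolding e_def .
      show ?thesis
      proof (cases "D + d \<le> T")
        case True
        have eT: "e \<le> T" using e' True by linarith
        have wyb: "?w y b = 2 powr (- \<alpha> * e / h)"
          unfolding wexp_def thr using hby yb eT by (simp add: e_def)
        have "2 powr (-2*\<alpha>) * ?w x b \<le> 2 powr (- \<alpha> * D / h) * 2 powr (- \<alpha> * d / h)"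
          unfolding wxb using small by (intro mult_right_mono) auto
        also have "\<dots> = 2 powr (- \<alpha> * (D + d) / h)"
        proof -
          have "- \<alpha> * (D + d) / h = - \<alpha> * D / h + - \<alpha> * d / h" by (simp only: distrib_left add_divide_distrib)
          then show ?thesis by (simp only: powr_add)
        qed
        also have "\<dots> \<le> 2 powr (- \<alpha> * e / h)"
        proof (rule p2_le)
          have "\<alpha> * e \<le> \<alpha> * (D + d)" using e' a1 by (intro mult_left_mono) auto
          then have "\<alpha> * e / h \<le> \<alpha> * (D + d) / h" using h by (intro divide_right_mono) auto
          then show "- \<alpha> * (D + d) / h \<le> - \<alpha> * e / h" by simp
        qed
        finally show ?thesis using wyb inv0 by linarith
      next
        case False
        have "- \<alpha> * d / h \<le> 2 * \<alpha> - 2 * L"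
        proof -
          have "T - D \<le> d" using False by linarith
          then have "\<alpha> * (T - D) \<le> \<alpha> * d" using a1 by (intro mult_left_mono) auto
          then have 1: "\<alpha> * (T - D) / h \<le> \<alpha> * d / h" using h by (intro divide_right_mono) auto
          have 2: "\<alpha> * (T - D) / h = 2 * L - \<alpha> * D / h" unfolding T_def using a1 h by (simp add: field_simps)
          have 3: "\<alpha> * D / h \<le> 2 * \<alpha>" using small_aux .
          have 4: "- \<alpha> * d / h = - (\<alpha> * d / h)" by simp
          show ?thesis using 1 2 3 4 by linarith
        qed
        then have "?w x b \<le> 2 powr (2 * \<alpha> - 2 * L)" unfolding wxb by (rule p2_le)
        also have "\<dots> = 2 powr (2 * \<alpha>) / n^2"
        proof -
          have "2 powr (2 * L) = (2 powr L) powr 2" by (simp add: powr_powr mult.commute)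
          also have "2 powr L = n" unfolding L_def using npos by simp
          also have "n powr (2::real) = n^2" using npos by (simp add: powr_numeral)
          finally show ?thesis by (simp add: powr_diff)
        qed
        finally have "2 powr (-2*\<alpha>) * ?w x b \<le> 2 powr (-2*\<alpha>) * (2 powr (2 * \<alpha>) / n^2)"
          by (intro mult_left_mono) auto
        also have "\<dots> = (2 powr (-2*\<alpha>) * 2 powr (2 * \<alpha>)) / n^2" by simp
        also have "2 powr (-2*\<alpha>) * 2 powr (2 * \<alpha>) = (1::real)" by (simp add: powr_add[symmetric])
        finally show ?thesis using wy0 unfolding n_def by linarith
      qed
    qed
  qed
qed

lemma wexp_vu:
  assumes fin: "finite V" and h: "h > 0" and a1: "1 \<le> \<alpha>" and aL: "\<alpha> \<le> log 2 (real (card V))"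
    and Dfin: "rdist E len u v \<noteq> \<infinity>" and Dle: "real (the_enat (rdist E len u v)) \<le> 2 * h"
  shows "wexp V E len h \<alpha> v u \<ge> 2 powr (-2*\<alpha>)"
proof (cases "u = v")
  case True then show ?thesis unfolding wexp_def using a1 p2_le1[of "-2*\<alpha>"] by simp
next
  case False
  define D where "D = real (the_enat (rdist E len u v))"
  have DT: "D \<le> 2 * h * log 2 (real (card V)) / \<alpha>"
  proof -
    have q: "1 \<le> log 2 (real (card V)) / \<alpha>" using aL a1 by (subst le_divide_eq_1_pos) auto
    have "2*h*1 \<le> 2*h*(log 2 (real (card V)) / \<alpha>)" using q h by (intro mult_left_mono) auto
    moreover have "2 * h * log 2 (real (card V)) / \<alpha> = 2*h*(log 2 (real (card V)) / \<alpha>)" by (simp only: times_divide_eq_right)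
    moreover have "D \<le> 2*h" using Dle unfolding D_def .
    ultimately show ?thesis by linarith
  qed
  have small: "2 powr (-2*\<alpha>) \<le> 2 powr (- \<alpha> * D / h)"
  proof -
    have "-2*\<alpha> \<le> - \<alpha> * D / h" using Dle h a1 unfolding D_def by (simp add: field_simps)
    then show ?thesis by simp
  qed
  have "wexp V E len h \<alpha> v u = 2 powr (- \<alpha> * D / h)"
    using False Dfin DT rdist_sym[of E len u v] unfolding wexp_def D_def by auto
  then show ?thesis using small by simp
qed

theorem lemma3p12:
  fixes V :: "'a set" and E :: "('a \<times> 'a) set" and len :: "'a \<times> 'a \<Rightarrow> nat"
    and h \<alpha> :: real and u v :: 'a
  assumes "finite V" and "E \<subseteq> V \<times> V" and "\<And>e. e \<in> E \<Longrightarrow> len e > 0"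
    and "h > 0" and "1 \<le> \<alpha>" and "\<alpha> \<le> log 2 (real (card V))"
    and "u \<in> V" and "v \<in> V"
    and "rdist E len u v \<noteq> \<infinity>" and "real (the_enat (rdist E len u v)) \<le> 2 * h"
  shows "(\<Sum>b\<in>V. min (mixing V E len h \<alpha> u b) (mixing V E len h \<alpha> v b)) \<ge> 2 powr (- 8 * \<alpha>)"
proof -
  note fin = assms(1) and h = assms(4) and a1 = assms(5) and aL = assms(6)
  define n where "n = real (card V)"
  define q where "q = (2::real) powr (-2*\<alpha>)"
  define p where "p = (2::real) powr (2*\<alpha>)"
  let ?w = "wexp V E len h \<alpha>"
  let ?W = "wtot V E len h \<alpha>"
  have qp: "q * p = 1" unfolding q_def p_def by (simp add: powr_add[symmetric])
  have p1: "p \<ge> 4"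
  proof -
    have "2 powr (2::real) \<le> 2 powr (2*\<alpha>)" using a1 by (intro p2_le) simp
    then show ?thesis unfolding p_def by simp
  qed
  have qpos: "q > 0" unfolding q_def by simp
  have "card V > 0" using \<open>u \<in> V\<close> fin card_gt_0_iff by blast
  then have npos: "n \<ge> 1" unfolding n_def by simp
  have w0: "\<And>x b. 0 \<le> ?w x b" by (rule wexp_nonneg)
  have w1: "\<And>x b. ?w x b \<le> 1" using a1 by (intro wexp_le1[OF h]) simp
  have W1: "?W x \<ge> 1" if "x \<in> V" for x
  proof -
    have "?w x x \<le> ?W x" unfolding wtot_def using that fin w0 by (intro member_le_sum) auto
    then show ?thesis unfolding wexp_def by simp
  qed
  have Wn: "?W x \<le> n" for x
  proof -
    have "?W x \<le> of_nat (card V) * 1" unfolding wtot_def using w1 by (intro sum_bounded_above) auto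
    then show ?thesis unfolding n_def by simp
  qed
  have k1: "\<And>b. ?w v b \<ge> q * ?w u b - 1 / n^2"
    using key[OF fin h a1 aL assms(9,10)] unfolding q_def n_def by blast
  have k2: "\<And>b. ?w u b \<ge> q * ?w v b - 1 / n^2"
    using key[OF fin h a1 aL, of E len v u] assms(9,10) rdist_sym[of E len u v] unfolding q_def n_def by auto
  have sumc: "(\<Sum>b\<in>V. 1 / n^2) = 1 / n" unfolding n_def by (simp add: power2_eq_square)
  have S1: "(\<Sum>b\<in>V. min (?w u b) (?w v b)) \<ge> q * ?W u - 1 / n"
  proof -
    have "(\<Sum>b\<in>V. q * ?w u b - 1 / n^2) \<le> (\<Sum>b\<in>V. min (?w u b) (?w v b))"
    proof (rule sum_mono)
      fix b
      have q1: "q \<le> 1" unfolding q_def using a1 by (intro p2_le1) simp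
      have "q * ?w u b \<le> ?w u b" using mult_left_le_one_le[OF w0[of u b] _ q1] qpos by simp
      moreover have "0 \<le> 1 / n^2" by simp
      ultimately show "q * ?w u b - 1 / n^2 \<le> min (?w u b) (?w v b)" using k1[of b]
        by (intro min.boundedI) linarith+
    qed
    moreover have "(\<Sum>b\<in>V. q * ?w u b - 1 / n^2) = q * ?W u - 1 / n"
      by (simp only: wtot_def sum_subtractf sumc sum_distrib_left)
    ultimately show ?thesis by linarith
  qed
  have S2: "?W u \<ge> q * ?W v - 1 / n"
  proof -
    have "(\<Sum>b\<in>V. q * ?w v b - 1 / n^2) \<le> (\<Sum>b\<in>V. ?w u b)" by (rule sum_mono) (rule k2)
    moreover have "(\<Sum>b\<in>V. q * ?w v b - 1 / n^2) = q * ?W v - 1 / n"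
      by (simp only: wtot_def sum_subtractf sumc sum_distrib_left)
    ultimately show ?thesis unfolding wtot_def by linarith
  qed
  define Mx where "Mx = p * (?W u + 1 / n)"
  have Wu1: "?W u \<ge> 1" and Wv1: "?W v \<ge> 1" using W1 assms(7,8) by auto
  have WvM: "?W v \<le> Mx"
  proof -
    have "p * (q * ?W v) \<le> p * (?W u + 1 / n)" using S2 p1 by (intro mult_left_mono) auto
    then show ?thesis unfolding Mx_def using qp by (simp add: mult.assoc[symmetric] mult.commute)
  qed
  have WuM: "?W u \<le> Mx"
  proof -
    have "1 * ?W u \<le> p * (?W u + 1 / n)" using p1 Wu1 npos
      by (intro mult_mono) auto
    then show ?thesis unfolding Mx_def by simp
  qed
  have hterm: "min (mixing V E len h \<alpha> u b) (mixing V E len h \<alpha> v b) \<ge> min (?w u b) (?w v b) / Mx" for b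
  proof -
    have a: "?w u b / Mx \<le> ?w u b / ?W u" using Wu1 WuM w0 by (intro divide_left_mono) auto
    have c: "?w v b / Mx \<le> ?w v b / ?W v" using Wv1 WvM w0 by (intro divide_left_mono) auto
    have "min (?w u b) (?w v b) / Mx = min (?w u b / Mx) (?w v b / Mx)"
      using Wu1 WuM by (simp add: min_divide_distrib_right)
    then show ?thesis using a c unfolding mixing_def by linarith
  qed
  have termnn: "min (mixing V E len h \<alpha> u b) (mixing V E len h \<alpha> v b) \<ge> 0" for b
    unfolding mixing_def using w0 Wu1 Wv1 by simp
  have q8: "2 powr (- 8 * \<alpha>) = (q * q) * (q * q)" unfolding q_def by (simp add: powr_add[symmetric])
  have qeq: "q = 1 / p" using qp p1 by (simp add: eq_divide_eq)
  have qle: "q \<le> 1/4" unfolding qeq using p1 by (simp add: field_simps)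
  have qq: "q * q \<le> 1/16" using mult_mono[OF qle qle] qpos by simp
  have qq3: "(q * q) * (q * q) \<le> (q * q) * (1/3)" using qq qpos by (intro mult_left_mono) auto
  have qq2: "(q * q) * (q * q) \<le> (q * q) * (1/2)" using qq qpos by (intro mult_left_mono) auto
  have sum0: "0 \<le> (\<Sum>b\<in>V. min (?w u b) (?w v b))"
    by (intro sum_nonneg min.boundedI w0)
  show ?thesis
  proof (cases "p \<le> n / 2")
    case True
    have nq: "1 / n \<le> q / 2" unfolding qeq using True npos p1 by (simp add: field_simps)
    have "q * 1 \<le> q * ?W u" using Wu1 qpos by (intro mult_left_mono) auto
    then have "q * ?W u / 2 \<le> (\<Sum>b\<in>V. min (?w u b) (?w v b))" using S1 nq by linarith
    moreover have "Mx \<le> p * (3 / 2 * ?W u)" unfolding Mx_def using nq qle Wu1 p1 by (intro mult_left_mono) auto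
    ultimately have "(q * ?W u / 2) / (p * (3 / 2 * ?W u)) \<le> (\<Sum>b\<in>V. min (?w u b) (?w v b)) / Mx"
      using Wu1 WuM qpos sum0 by (intro frac_le) auto
    moreover have "(q * ?W u / 2) / (p * (3 / 2 * ?W u)) = q * q / 3"
      unfolding qeq using Wu1 p1 by (simp add: field_simps)
    moreover have "(\<Sum>b\<in>V. min (?w u b) (?w v b)) / Mx \<le> (\<Sum>b\<in>V. min (mixing V E len h \<alpha> u b) (mixing V E len h \<alpha> v b))"
      unfolding sum_divide_distrib by (intro sum_mono hterm)
    moreover have "(q * q) * (q * q) \<le> q * q / 3" using qq3 by simp
    ultimately show ?thesis using q8 by linarith
  next
    case False
    have vu: "?w v u \<ge> q" using wexp_vu[OF fin h a1 aL assms(9,10)] unfolding q_def .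
    have "min (mixing V E len h \<alpha> u u) (mixing V E len h \<alpha> v u) \<ge> q / n"
    proof -
      have "1 / n \<le> 1 / ?W u" using Wu1 Wn[of u] by (simp add: frac_le)
      moreover have "q / n \<le> 1 / n" using qle npos by (simp add: divide_right_mono)
      moreover have "q / n \<le> ?w v u / ?W v" using vu Wv1 Wn[of v] qpos by (intro frac_le) auto
      moreover have "?w u u = 1" unfolding wexp_def by simp
      ultimately show ?thesis unfolding mixing_def by simp
    qed
    moreover have "min (mixing V E len h \<alpha> u u) (mixing V E len h \<alpha> v u) \<le>
        (\<Sum>b\<in>V. min (mixing V E len h \<alpha> u b) (mixing V E len h \<alpha> v b))"
    proof -
      have "(\<Sum>b\<in>{u}. min (mixing V E len h \<alpha> u b) (mixing V E len h \<alpha> v b)) \<le>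
        (\<Sum>b\<in>V. min (mixing V E len h \<alpha> u b) (mixing V E len h \<alpha> v b))"
        using assms(7) fin termnn by (intro sum_mono2) auto
      then show ?thesis by simp
    qed
    moreover have "(q * q) * (q * q) \<le> q / n"
    proof -
      have "1 / n \<ge> q / 2" unfolding qeq using False npos p1 by (simp add: field_simps)
      then have "q * (q / 2) \<le> q * (1 / n)" using qpos by (intro mult_left_mono) auto
      moreover have "q * (1 / n) = q / n" by simp
      ultimately have "q * (q / 2) \<le> q / n" by linarith
      moreover have "(q * q) * (q * q) \<le> q * (q / 2)" using qq2 by simp
      ultimately show ?thesis by linarith
    qed
    ultimately show ?thesis unfolding q8 by linarith
  qed
qed


end
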